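(* Let $A$ be an $n\times n$ complex matrix with eigenvalues (counted with algebraic multiplicity) $\lambda_1,\lambda_2,\dots,\lambda_n$. Let $\mathbf{w}_1,\dots,\mathbf{w}_k$ be left eigenvectors of $A$ for the eigenvalues $\lambda_1,\dots,\lambda_k$, respectively. If $\mathbf{x}\in\mathbb{C}^n$ satisfies $\mathbf{w}_j^{*}\mathbf{x}=0$ for $j=2,\dots,k$, then the eigenvalues of $A+\mathbf{x}(\mathbf{w}_1+\cdots+\mathbf{w}_k)^{*}$, counted with multiplicity, are $\lambda_1+\mathbf{w}_1^{*}\mathbf{x},\lambda_2,\dots,\lambda_n$.
   Context: A left eigenvector $\mathbf{w}$ of $A$ for eigenvalue $\lambda$ is a nonzero vector with $\mathbf{w}^{*}A=\lambda\mathbf{w}^{*}$. *)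

theory Defs
  imports "Jordan_Normal_Form.Matrix" "Jordan_Normal_Form.Char_Poly"
begin

definition vec_star :: "complex vec \<Rightarrow> complex mat" where
  "vec_star w = mat_of_row (conjugate w)"

definition left_eigenvector :: "complex mat \<Rightarrow> complex vec \<Rightarrow> complex \<Rightarrow> bool" where
  "left_eigenvector A w l \<longleftrightarrow>
     w \<in> carrier_vec (dim_row A) \<and> w \<noteq> 0\<^sub>v (dim_row A) \<and>
     vec_star w * A = l \<cdot>\<^sub>m vec_star w"

end

theory Submission imports Defs begin

lemma det_rank_one:
  fixes Y Z :: "'a :: idom mat"
  assumes Y: "Y \<in> carrier_mat n 1" and Z: "Z \<in> carrier_mat 1 n"
  shows "det (1\<^sub>m n - Y * Z) = 1 - (Z * Y) $$ (0,0)"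
proof -
  let ?M = "four_block_mat (1\<^sub>m n) Y Z (1\<^sub>m 1)"
  let ?L = "four_block_mat (1\<^sub>m n) (0\<^sub>m n 1) (-Z) (1\<^sub>m 1)"
  have M: "?M \<in> carrier_mat (n+1) (n+1)" using Y Z by auto
  have L: "?L \<in> carrier_mat (n+1) (n+1)" using Y Z by auto
  have LM: "?L * ?M = four_block_mat (1\<^sub>m n) Y (0\<^sub>m 1 n) (1\<^sub>m 1 - Z * Y)"
  proof -
    have "?L * ?M = four_block_mat (1\<^sub>m n * 1\<^sub>m n + 0\<^sub>m n 1 * Z) (1\<^sub>m n * Y + 0\<^sub>m n 1 * 1\<^sub>m 1)
      (-Z * 1\<^sub>m n + 1\<^sub>m 1 * Z) (-Z * Y + 1\<^sub>m 1 * 1\<^sub>m 1)"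
      by (rule mult_four_block_mat, insert Y Z, auto)
    also have "-Z * 1\<^sub>m n + 1\<^sub>m 1 * Z = 0\<^sub>m 1 n" using Z by (auto intro!: eq_matI)
    also have "-Z * Y + 1\<^sub>m 1 * 1\<^sub>m 1 = 1\<^sub>m 1 - Z * Y" using Y Z by (auto intro!: eq_matI)
    also have "1\<^sub>m n * 1\<^sub>m n + 0\<^sub>m n 1 * Z = 1\<^sub>m n" using Z by (auto intro!: eq_matI)
    also have "1\<^sub>m n * Y + 0\<^sub>m n 1 * 1\<^sub>m 1 = Y" using Y by (auto intro!: eq_matI)
    finally show ?thesis .
  qed
  have hML: "?M * ?L = four_block_mat (1\<^sub>m n - Y * Z) Y (0\<^sub>m 1 n) (1\<^sub>m 1)"
  proof -
    have "?M * ?L = four_block_mat (1\<^sub>m n * 1\<^sub>m n + Y * -Z) (1\<^sub>m n * 0\<^sub>m n 1 + Y * 1\<^sub>m 1)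
      (Z * 1\<^sub>m n + 1\<^sub>m 1 * -Z) (Z * 0\<^sub>m n 1 + 1\<^sub>m 1 * 1\<^sub>m 1)"
      by (rule mult_four_block_mat, insert Y Z, auto)
    also have "1\<^sub>m n * 1\<^sub>m n + Y * -Z = 1\<^sub>m n - Y * Z" using Y Z by (auto intro!: eq_matI)
    also have "1\<^sub>m n * 0\<^sub>m n 1 + Y * 1\<^sub>m 1 = Y" using Y by (auto intro!: eq_matI)
    also have "Z * 1\<^sub>m n + 1\<^sub>m 1 * -Z = 0\<^sub>m 1 n" using Z by (auto intro!: eq_matI)
    also have "Z * 0\<^sub>m n 1 + 1\<^sub>m 1 * 1\<^sub>m 1 = (1\<^sub>m 1 :: 'a mat)" using Z by (auto intro!: eq_matI)
    finally show ?thesis .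
  qed
  have dL: "det ?L = 1"
    by (subst det_four_block_mat_upper_right_zero[of _ n _ 1], insert Z, auto)
  have "det (?L * ?M) = det (?M * ?L)"
    using det_mult[OF L M] det_mult[OF M L] by (simp add: mult.commute)
  also have "det (?L * ?M) = det (1\<^sub>m 1 - Z * Y)" unfolding LM
    by (subst det_four_block_mat_lower_left_zero[of _ n _ 1], insert Y Z, auto)
  also have "det (?M * ?L) = det (1\<^sub>m n - Y * Z)" unfolding hML
    by (subst det_four_block_mat_lower_left_zero[of _ n _ 1], insert Y Z, auto)
  finally have "det (1\<^sub>m n - Y * Z) = det (1\<^sub>m 1 - Z * Y)" ..
  also have "\<dots> = 1 - (Z * Y) $$ (0,0)"
    by (subst det_single, insert Y Z, auto)
  finally show ?thesis .
qed

lemma row_mult_00: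
  fixes y :: "'a :: comm_ring_1 vec"
  assumes y: "y \<in> carrier_vec n" and M: "M \<in> carrier_mat n 1"
  shows "(mat_of_row y * M) $$ (0,0) = (\<Sum>i<n. y $ i * M $$ (i,0))"
proof -
  have "(mat_of_row y * M) $$ (0,0) = row (mat_of_row y) 0 \<bullet> col M 0"
    using M by (subst index_mult_mat, auto)
  also have "\<dots> = (\<Sum>i<n. y $ i * M $$ (i,0))"
    using y M by (simp add: scalar_prod_def lessThan_atLeast0)
  finally show ?thesis .
qed

lemma pointwise:
  fixes A :: "complex mat" and n k :: nat and lam :: "nat \<Rightarrow> complex"
    and w :: "nat \<Rightarrow> complex vec" and x :: "complex vec" and t :: complex
  assumes A: "A \<in> carrier_mat n n"
    and eig: "char_poly A = (\<Prod>i\<in>{1..n}. [:- lam i, 1:])"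
    and k: "1 \<le> k" "k \<le> n"
    and lev: "\<And>j. j \<in> {1..k} \<Longrightarrow> left_eigenvector A (w j) (lam j)"
    and x: "x \<in> carrier_vec n"
    and orth: "\<And>j. j \<in> {2..k} \<Longrightarrow> conjugate (w j) \<bullet> x = 0"
    and t: "t \<notin> lam ` {1..n}"
  shows "poly (char_poly (A + mat_of_cols n [x] * vec_star (vec n (\<lambda>i. \<Sum>j\<in>{1..k}. w j $ i)))) t
           = poly ([:- (lam 1 + conjugate (w 1) \<bullet> x), 1:] * (\<Prod>i\<in>{2..n}. [:- lam i, 1:])) t"
proof -
  define X where "X = mat_of_cols n [x]"
  define v where "v = vec n (\<lambda>i. \<Sum>j\<in>{1..k}. w j $ i)"
  define V where "V = vec_star v"
  define R where "R j = vec_star (w j)" for j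
  define c where "c = conjugate (w 1) \<bullet> x"
  define N where "N = t \<cdot>\<^sub>m 1\<^sub>m n - A"
  define d where "d = det N"
  have X: "X \<in> carrier_mat n 1" unfolding X_def by auto
  have V: "V \<in> carrier_mat 1 n" unfolding V_def v_def vec_star_def by auto
  have N: "N \<in> carrier_mat n n" unfolding N_def using A by auto
  have wc: "w j \<in> carrier_vec n" if "j \<in> {1..k}" for j
    using lev[OF that] A unfolding left_eigenvector_def by auto
  have R: "R j \<in> carrier_mat 1 n" if "j \<in> {1..k}" for j
    using wc[OF that] unfolding R_def vec_star_def by auto
  have B: "A + X * V \<in> carrier_mat n n" using A X V by auto
  have "poly (char_poly (A + X * V)) t = det (- char_matrix (A + X * V) t)"
    by (rule char_poly_matrix[OF B])
  also have "- char_matrix (A + X * V) t = N - X * V"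
    unfolding char_matrix_def N_def using A X V by (auto intro!: eq_matI)
  finally have e1: "poly (char_poly (A + X * V)) t = det (N - X * V)" .
  have "poly (char_poly A) t = det (- char_matrix A t)"
    by (rule char_poly_matrix[OF A])
  also have "- char_matrix A t = N"
    unfolding char_matrix_def N_def using A by (auto intro!: eq_matI)
  finally have dprod: "d = (\<Prod>i\<in>{1..n}. t - lam i)"
    unfolding d_def eig by (simp add: poly_prod)
  have d0: "d \<noteq> 0" unfolding dprod using t by auto
  define Ni where "Ni = (1 / d) \<cdot>\<^sub>m adj_mat N"
  have Ni: "Ni \<in> carrier_mat n n" unfolding Ni_def using adj_mat(1)[OF N] by auto
  have NNi: "N * Ni = 1\<^sub>m n" unfolding Ni_def
    using adj_mat[OF N] N d0 unfolding d_def[symmetric]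
    by (subst mult_smult_distrib[of _ n n _ n], auto intro!: eq_matI)
  have NiN: "Ni * N = 1\<^sub>m n" unfolding Ni_def
    using adj_mat[OF N] N d0 unfolding d_def[symmetric]
    by (subst mult_smult_assoc_mat[of _ n n _ n], auto intro!: eq_matI)
  have Y: "Ni * X \<in> carrier_mat n 1" using Ni X by auto
  have "N * (1\<^sub>m n - (Ni * X) * V) = N * 1\<^sub>m n - N * ((Ni * X) * V)"
    by (rule mult_minus_distrib_mat[OF N], insert Y V, auto)
  also have "N * ((Ni * X) * V) = (N * Ni) * X * V"
  proof -
    have "(Ni * X) * V = Ni * (X * V)" by (rule assoc_mult_mat[OF Ni X V])
    hence "N * ((Ni * X) * V) = N * (Ni * (X * V))" by simp
    also have "\<dots> = (N * Ni) * (X * V)" by (rule assoc_mult_mat[symmetric, OF N Ni], insert X V, auto)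
    also have "\<dots> = (N * Ni) * X * V" by (rule assoc_mult_mat[symmetric, OF _ X V], insert N Ni, auto)
    finally show ?thesis .
  qed
  also have "\<dots> = X * V" unfolding NNi using X by simp
  finally have "N - X * V = N * (1\<^sub>m n - (Ni * X) * V)" using N by simp
  hence "det (N - X * V) = d * det (1\<^sub>m n - (Ni * X) * V)"
    unfolding d_def by (metis det_mult[OF N] minus_carrier_mat one_carrier_mat mult_carrier_mat Y V)
  also have "det (1\<^sub>m n - (Ni * X) * V) = 1 - (V * (Ni * X)) $$ (0,0)"
    by (rule det_rank_one[OF Y V])
  finally have e2: "det (N - X * V) = d * (1 - (V * (Ni * X)) $$ (0,0))" .
  have lin: "(V * (Ni * X)) $$ (0,0) = (\<Sum>j\<in>{1..k}. (R j * (Ni * X)) $$ (0,0))"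
  proof -
    have "(V * (Ni * X)) $$ (0,0) = (\<Sum>i<n. (\<Sum>j\<in>{1..k}. conjugate (w j $ i)) * (Ni * X) $$ (i,0))"
      unfolding V_def vec_star_def v_def
      by (subst row_mult_00[OF _ Y], auto simp: sum_conjugate)
    also have "\<dots> = (\<Sum>j\<in>{1..k}. \<Sum>i<n. conjugate (w j $ i) * (Ni * X) $$ (i,0))"
      by (simp add: sum_distrib_right sum.swap[of _ "{..<n}"])
    also have "\<dots> = (\<Sum>j\<in>{1..k}. (R j * (Ni * X)) $$ (0,0))"
      unfolding R_def vec_star_def
      by (intro sum.cong refl, subst row_mult_00[OF _ Y], simp add: wc, rule sum.cong, simp,
          subst vec_index_conjugate, insert wc, force, simp)
    finally show ?thesis .
  qed
  have hterm: "(R j * (Ni * X)) $$ (0,0) = conjugate (w j) \<bullet> x / (t - lam j)" if j: "j \<in> {1..k}" for j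
  proof -
    have tl: "t - lam j \<noteq> 0" using t j k by auto
    have RA: "R j * A = lam j \<cdot>\<^sub>m R j" using lev[OF j] unfolding left_eigenvector_def R_def by auto
    have "R j * N = R j * (t \<cdot>\<^sub>m 1\<^sub>m n) - R j * A" unfolding N_def
      by (rule mult_minus_distrib_mat[OF R[OF j]], insert A, auto)
    also have "\<dots> = (t - lam j) \<cdot>\<^sub>m R j" unfolding RA using R[OF j]
      by (auto intro!: eq_matI simp: algebra_simps)
    finally have RN: "R j * N = (t - lam j) \<cdot>\<^sub>m R j" .
    have "R j = R j * (N * Ni)" unfolding NNi using R[OF j] by simp
    also have "\<dots> = (R j * N) * Ni" using R[OF j] N Ni by simp
    also have "\<dots> = (t - lam j) \<cdot>\<^sub>m (R j * Ni)" unfolding RN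
      by (rule mult_smult_assoc_mat[OF R[OF j] Ni])
    finally have "(1 / (t - lam j)) \<cdot>\<^sub>m R j = (1 / (t - lam j)) \<cdot>\<^sub>m ((t - lam j) \<cdot>\<^sub>m (R j * Ni))"
      by simp
    also have "\<dots> = R j * Ni" using tl R[OF j] Ni by (auto intro!: eq_matI)
    finally have RNi: "R j * Ni = (1 / (t - lam j)) \<cdot>\<^sub>m R j" ..
    have "R j * (Ni * X) = (R j * Ni) * X" using R[OF j] Ni X by simp
    also have "\<dots> = (1 / (t - lam j)) \<cdot>\<^sub>m (R j * X)" unfolding RNi
      by (rule mult_smult_assoc_mat[OF R[OF j] X])
    finally show ?thesis using R[OF j] X wc[OF j] x unfolding R_def vec_star_def X_def
      by simp
  qed
  have "(V * (Ni * X)) $$ (0,0) = c / (t - lam 1)"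
  proof -
    have "(V * (Ni * X)) $$ (0,0) = (\<Sum>j\<in>{1..k}. conjugate (w j) \<bullet> x / (t - lam j))"
      unfolding lin by (rule sum.cong, auto simp: hterm)
    also have "\<dots> = conjugate (w 1) \<bullet> x / (t - lam 1)"
      using k by (subst sum.remove[of _ 1], auto simp: orth)
    finally show ?thesis unfolding c_def .
  qed
  with e1 e2 have main: "poly (char_poly (A + X * V)) t = d * (1 - c / (t - lam 1))" by simp
  have t1: "t - lam 1 \<noteq> 0" using t k by auto
  have dsplit: "d = (t - lam 1) * (\<Prod>i\<in>{2..n}. t - lam i)"
    unfolding dprod using k by (subst prod.remove[of _ 1], auto intro!: arg_cong[where f="prod _"])
  show ?thesis unfolding main[unfolded X_def V_def v_def] c_def[symmetric]
    using t1 by (simp add: dsplit poly_prod field_simps)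
qed

theorem theorem3p6:
  fixes A :: "complex mat" and n k :: nat and lam :: "nat \<Rightarrow> complex"
    and w :: "nat \<Rightarrow> complex vec" and x :: "complex vec"
  assumes A: "A \<in> carrier_mat n n"
    and eig: "char_poly A = (\<Prod>i\<in>{1..n}. [:- lam i, 1:])"
    and k: "1 \<le> k" "k \<le> n"
    and lev: "\<And>j. j \<in> {1..k} \<Longrightarrow> left_eigenvector A (w j) (lam j)"
    and x: "x \<in> carrier_vec n"
    and orth: "\<And>j. j \<in> {2..k} \<Longrightarrow> conjugate (w j) \<bullet> x = 0"
  shows "char_poly (A + mat_of_cols n [x] * vec_star (vec n (\<lambda>i. \<Sum>j\<in>{1..k}. w j $ i)))
           = [:- (lam 1 + conjugate (w 1) \<bullet> x), 1:] * (\<Prod>i\<in>{2..n}. [:- lam i, 1:])"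
    (is "?p = ?q")
proof (rule ccontr)
  assume ne: "?p \<noteq> ?q"
  hence "?p - ?q \<noteq> 0" by simp
  hence fin: "finite {t. poly (?p - ?q) t = 0}" by (rule poly_roots_finite)
  have "UNIV - lam ` {1..n} \<subseteq> {t. poly (?p - ?q) t = 0}"
    using pointwise[OF A eig k lev x orth] by auto
  hence "finite (UNIV - lam ` {1..n})" using fin by (rule finite_subset)
  hence "finite (UNIV :: complex set)" by simp
  thus False using infinite_UNIV_char_0 by blast
qed
end
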